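(* Let $(Q,\cdot)$ be a quadratical quasigroup of order $9$. Then there exist distinct $a,b\in Q$ such that $Q=\{aba\}\cup H1\cup H2$, i.e. $Q=\{aba,\ a,\ ab,\ ba,\ b,\ a\cdot ab,\ ab\cdot b,\ ba\cdot a,\ b\cdot ba\}$.
   Context: A quadratical quasigroup is a quasigroup $(Q,\cdot)$ satisfying $xy\cdot x=zx\cdot yz$ for all $x,y,z\in Q$; equivalently, a groupoid satisfying $x\cdot x=x$, $yx\cdot xy=x$ and $xy\cdot zw=xz\cdot yw$. For distinct $a,b$, $aba$ denotes $ab\cdot a$, $H1=\{a,ab,ba,b\}$ and $H2=\{a\cdot ab,\ ab\cdot b,\ ba\cdot a,\ b\cdot ba\}$. *)

theory Defs
  imports Main
begin

definition quasigroup :: "'a set \<Rightarrow> ('a \<Rightarrow> 'a \<Rightarrow> 'a) \<Rightarrow> bool" where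
  "quasigroup Q m \<longleftrightarrow>
     (\<forall>x\<in>Q. \<forall>y\<in>Q. m x y \<in> Q) \<and>
     (\<forall>a\<in>Q. \<forall>b\<in>Q. (\<exists>!x. x \<in> Q \<and> m a x = b) \<and> (\<exists>!y. y \<in> Q \<and> m y a = b))"

definition quadratical_quasigroup :: "'a set \<Rightarrow> ('a \<Rightarrow> 'a \<Rightarrow> 'a) \<Rightarrow> bool" where
  "quadratical_quasigroup Q m \<longleftrightarrow> quasigroup Q m \<and>
     (\<forall>x\<in>Q. \<forall>y\<in>Q. \<forall>z\<in>Q. m (m x y) x = m (m z x) (m y z))"

end

theory Submission imports Defs "HOL-Algebra.Multiplicative_Group" begin
locale qq =
  fixes Q :: "'a set" and m ld rd :: "'a \<Rightarrow> 'a \<Rightarrow> 'a"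
  assumes clo: "x \<in> Q \<Longrightarrow> y \<in> Q \<Longrightarrow> m x y \<in> Q"
  and ldQ: "x \<in> Q \<Longrightarrow> y \<in> Q \<Longrightarrow> ld x y \<in> Q"
  and rdQ: "x \<in> Q \<Longrightarrow> y \<in> Q \<Longrightarrow> rd x y \<in> Q"
  and a1: "x \<in> Q \<Longrightarrow> y \<in> Q \<Longrightarrow> m x (ld x y) = y"
  and a2: "x \<in> Q \<Longrightarrow> y \<in> Q \<Longrightarrow> ld x (m x y) = y"
  and a3: "x \<in> Q \<Longrightarrow> y \<in> Q \<Longrightarrow> m (rd x y) y = x"
  and a4: "x \<in> Q \<Longrightarrow> y \<in> Q \<Longrightarrow> rd (m x y) y = x"
  and q: "x \<in> Q \<Longrightarrow> y \<in> Q \<Longrightarrow> z \<in> Q \<Longrightarrow> m (m x y) x = m (m z x) (m y z)"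
begin
lemma idem: "x \<in> Q \<Longrightarrow> m x x = x"
  by (metis a2 clo q)
lemma f1: "a \<in> Q \<Longrightarrow> aa \<in> Q \<Longrightarrow> ab \<in> Q \<Longrightarrow> m ab aa = m a (m (ld aa ab) (rd a aa))"
  by (metis a1 a3 q ldQ rdQ)
lemma f3: "a \<in> Q \<Longrightarrow> aa \<in> Q \<Longrightarrow> ab \<in> Q \<Longrightarrow> m a (m aa ab) = m (m a aa) (m a ab)"
  by (smt (verit, ccfv_SIG) a1 idem ldQ q)
lemma rdist: "a \<in> Q \<Longrightarrow> b \<in> Q \<Longrightarrow> c \<in> Q \<Longrightarrow> m (m a b) c = m (m a c) (m b c)"
  by (smt (verit, ccfv_SIG) a3 idem q rdQ)
lemma f2: "a \<in> Q \<Longrightarrow> aa \<in> Q \<Longrightarrow> ab \<in> Q \<Longrightarrow> m (m (ld a aa) (rd ab a)) aa = m ab (rd ab a)"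
  by (metis a1 a3 q ldQ rdQ)
lemma medial: "a \<in> Q \<Longrightarrow> b \<in> Q \<Longrightarrow> c \<in> Q \<Longrightarrow> d \<in> Q \<Longrightarrow> m (m a b) (m c d) = m (m a c) (m b d)"
  by (smt (verit, ccfv_SIG) clo idem q)
lemma lcan: "a \<in> Q \<Longrightarrow> x \<in> Q \<Longrightarrow> y \<in> Q \<Longrightarrow> m a x = m a y \<Longrightarrow> x = y"
  by (metis a2)
lemma rcan: "a \<in> Q \<Longrightarrow> x \<in> Q \<Longrightarrow> y \<in> Q \<Longrightarrow> m x a = m y a \<Longrightarrow> x = y"
  by (metis a4)
end

locale qqe = qq + fixes e assumes eQ: "e \<in> Q"
begin
definition add where "add x y = m (rd x e) (ld e y)"
lemma add_closed: "x \<in> Q \<Longrightarrow> y \<in> Q \<Longrightarrow> add x y \<in> Q"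
  unfolding add_def by (simp add: clo ldQ rdQ eQ)
lemma rdee: "rd e e = e" by (metis a4 idem eQ)
lemma ldee: "ld e e = e" by (metis a2 idem eQ)
lemma add_e_left: "y \<in> Q \<Longrightarrow> add e y = y"
  unfolding add_def by (simp add: rdee a1 eQ)
lemma add_e_right: "y \<in> Q \<Longrightarrow> add y e = y"
  unfolding add_def by (simp add: ldee a3 eQ)
lemma prod: "x \<in> Q \<Longrightarrow> y \<in> Q \<Longrightarrow> m x y = add (m x e) (m e y)"
  unfolding add_def by (simp add: a2 a4 eQ)
lemma RL: "x \<in> Q \<Longrightarrow> m (m e x) e = m e (m x e)"
  by (metis eQ idem medial)
lemma R_hom: assumes x: "x \<in> Q" and y: "y \<in> Q" shows "m (add x y) e = add (m x e) (m y e)"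
proof -
  define p where "p = rd x e"
  define q where "q = ld e y"
  have Q: "p \<in> Q" "q \<in> Q" using x y eQ ldQ rdQ p_def q_def by auto
  have h: "m p e = x" "m e q = y" using x y eQ a1 a3 p_def q_def by auto
  have 1: "m (add x y) e = m x (m q e)" unfolding add_def p_def[symmetric] q_def[symmetric]
    using rdist[of p q e] Q eQ h by simp
  have "m e (m q e) = m y e" using f3[of e q e] Q eQ h idem by simp
  hence 2: "ld e (m y e) = m q e" using a2[of e "m q e"] Q eQ clo by simp
  show ?thesis unfolding add_def[of "m x e"] using 1 2 a4[of x e] x eQ by simp
qed
lemma L_hom: assumes x: "x \<in> Q" and y: "y \<in> Q" shows "m e (add x y) = add (m e x) (m e y)"
proof -
  define p where "p = rd x e"
  define q where "q = ld e y"
  have Q: "p \<in> Q" "q \<in> Q" using x y eQ ldQ rdQ p_def q_def by auto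
  have h: "m p e = x" "m e q = y" using x y eQ a1 a3 p_def q_def by auto
  have 1: "m e (add x y) = m (m e p) y" unfolding add_def p_def[symmetric] q_def[symmetric]
    using f3[of e p q] Q eQ h by simp
  have "m (m e p) e = m e x" using rdist[of e p e] Q eQ h idem by simp
  hence 2: "rd (m e x) e = m e p" using a4[of "m e p" e] Q eQ clo by simp
  show ?thesis unfolding add_def[of "m e x"] using 1 2 a2[of e y] y eQ by simp
qed
lemma add_comm: assumes x: "x \<in> Q" and y: "y \<in> Q" shows "add x y = add y x"
proof -
  define p where "p = rd x e"
  define q where "q = ld e y"
  define u where "u = rd y e"
  define v where "v = ld e x"
  have Q: "p \<in> Q" "q \<in> Q" "u \<in> Q" "v \<in> Q" using x y eQ ldQ rdQ p_def q_def u_def v_def by auto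
  have h: "m p e = x" "m e q = y" "m u e = y" "m e v = x" using x y eQ a1 a3 p_def q_def u_def v_def by auto
  have "m (m p q) e = m (m u v) e"
  proof -
    have "m (m p q) e = m (m p e) (m q e)" using rdist Q eQ by auto
    also have "\<dots> = m (m e v) (m q e)" using h by simp
    also have "\<dots> = m (m e q) (m v e)" using medial Q eQ by auto
    also have "\<dots> = m (m u e) (m v e)" using h by simp
    also have "\<dots> = m (m u v) e" using rdist Q eQ by auto
    finally show ?thesis .
  qed
  hence "m p q = m u v" using rcan[of e "m p q" "m u v"] Q eQ clo by simp
  thus ?thesis unfolding add_def p_def q_def u_def v_def .
qed
lemma add_assoc: assumes x: "x \<in> Q" and y: "y \<in> Q" and z: "z \<in> Q"
  shows "add (add x y) z = add x (add y z)"
proof -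
  define p where "p = rd x e"
  define q where "q = ld e y"
  define a where "a = rd p e"
  define b where "b = rd q e"
  define c where "c = ld e (ld e z)"
  have Q: "p \<in> Q" "q \<in> Q" "a \<in> Q" "b \<in> Q" "c \<in> Q"
    using x y z eQ ldQ rdQ p_def q_def a_def b_def c_def by auto
  have h1: "m a e = p" "m b e = q" "m e c = ld e z" "m p e = x" "m e q = y"
    using x y z eQ a1 a3 ldQ rdQ p_def q_def a_def b_def c_def by auto
  have e1: "rd (m p q) e = m a b"
  proof -
    have "m (m a b) e = m p q" using rdist[of a b e] Q eQ h1 by simp
    thus ?thesis using a4[of "m a b" e] Q clo eQ by simp
  qed
  have e2: "rd y e = m e b"
  proof -
    have "m (m e b) e = m e (m b e)" using RL Q by simp
    also have "\<dots> = y" using h1 by simp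
    finally show ?thesis using a4[of "m e b" e] Q clo eQ by simp
  qed
  have e3: "ld e (add y z) = m b c"
  proof -
    have "add y z = m (m e b) (m e c)" unfolding add_def using e2 h1 by simp
    also have "\<dots> = m e (m b c)" using f3[of e b c] Q eQ by simp
    finally show ?thesis using a2[of e "m b c"] Q clo eQ by simp
  qed
  have "add (add x y) z = m (m a b) (m e c)" unfolding add_def using e1 h1 p_def q_def by simp
  also have "\<dots> = m (m a e) (m b c)" using medial[of a b e c] Q eQ by simp
  also have "\<dots> = add x (add y z)" using e3 h1 unfolding add_def p_def by simp
  finally show ?thesis .
qed
lemma add_inv: "x \<in> Q \<Longrightarrow> \<exists>y\<in>Q. add y x = e"
proof -
  assume x: "x \<in> Q"
  define y where "y = m (rd e (ld e x)) e"
  have "y \<in> Q" using x eQ clo ldQ rdQ y_def by auto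
  moreover have "add y x = e" unfolding add_def y_def using x eQ a3 a4 ldQ rdQ by simp
  ultimately show ?thesis by blast
qed
lemma add_lcomm: "x \<in> Q \<Longrightarrow> y \<in> Q \<Longrightarrow> z \<in> Q \<Longrightarrow> add x (add y z) = add y (add x z)"
  by (metis add_assoc add_comm)
lemmas add_ac = add_assoc add_comm add_lcomm

fun pw where "pw x 0 = e" | "pw x (Suc n) = add (pw x n) x"
lemma pw_closed[simp]: "x \<in> Q \<Longrightarrow> pw x n \<in> Q"
  by (induction n) (auto simp: eQ add_closed)
lemma pw_add: "x \<in> Q \<Longrightarrow> pw x (a + b) = add (pw x a) (pw x b)"
  by (induction b) (auto simp: add_e_right add_assoc)
lemma pw_mult: "x \<in> Q \<Longrightarrow> pw x (a * b) = pw (pw x a) b"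
  by (induction b) (auto simp: pw_add add_comm)
lemma pw_e: "pw e n = e"
  by (induction n) (auto simp: add_e_left eQ)
lemma pw_distrib: "x \<in> Q \<Longrightarrow> y \<in> Q \<Longrightarrow> pw (add x y) n = add (pw x n) (pw y n)"
  by (induction n) (auto simp: add_e_left eQ add_ac add_closed)
lemma R_pw: "x \<in> Q \<Longrightarrow> m (pw x n) e = pw (m x e) n"
  by (induction n) (auto simp: idem eQ R_hom)

definition G :: "'a monoid" where "G = \<lparr>carrier = Q, mult = add, one = e\<rparr>"
lemma cg: "comm_group G"
proof (rule comm_groupI)
  fix x y assume "x \<in> carrier G" "y \<in> carrier G"
  thus "x \<otimes>\<^bsub>G\<^esub> y = y \<otimes>\<^bsub>G\<^esub> x" using add_comm by (simp add: G_def)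
qed (auto simp: G_def add_closed eQ add_assoc add_e_left add_inv)
lemma pw_G: "pw x n = x [^]\<^bsub>G\<^esub> n"
  by (induction n) (auto simp: G_def)
lemma lagrange: "finite Q \<Longrightarrow> x \<in> Q \<Longrightarrow> pw x (card Q) = e"
proof -
  assume f: "finite Q" and x: "x \<in> Q"
  interpret comm_group G by (rule cg)
  have "x [^]\<^bsub>G\<^esub> order G = \<one>\<^bsub>G\<^esub>" by (rule pow_order_eq_1) (simp add: G_def x)
  thus ?thesis by (simp add: pw_G order_def G_def)
qed
end

lemma Dmod: "\<not> (p mod 3 = 0 \<and> q mod 3 = 0) \<Longrightarrow> ((p+q)*p + 32*(q*q::nat)) mod 3 \<noteq> 0"
proof -
  assume h: "\<not> (p mod 3 = 0 \<and> q mod 3 = 0)"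
  define i where "i = p div 3" define a where "a = p mod 3"
  define j where "j = q div 3" define b where "b = q mod 3"
  have p: "p = 3*i+a" and q: "q = 3*j+b" unfolding i_def a_def j_def b_def by auto
  have e: "(p+q)*p + 32*(q*q) = 3*((i+j)*(3*i+a) + (a+b)*i + 32*(3*j*j+2*j*b)) + ((a+b)*a + 32*(b*b))"
    unfolding p q by (simp add: algebra_simps)
  have e2: "((p+q)*p + 32*(q*q)) mod 3 = ((a+b)*a + 32*(b*b)) mod 3"
    unfolding e by (metis mod_mult_self4)
  have "a < 3" "b < 3" unfolding a_def b_def by auto
  then have "a \<in> {0,1,2}" "b \<in> {0,1,2}" by auto
  with h show ?thesis unfolding e2 a_def[symmetric] b_def[symmetric] by auto
qed
lemma "(D::nat) mod 3 \<noteq> 0 \<Longrightarrow> D mod 9 = 1 \<or> D mod 9 = 2 \<or> D mod 9 = 4 \<or> D mod 9 = 5 \<or> D mod 9 = 7 \<or> D mod 9 = 8"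
  by presburger

locale qq9 = qqe +
  fixes d assumes fin: "finite Q" and card9: "card Q = 9" and dQ: "d \<in> Q"
begin
abbreviation "r \<equiv> m d e"
lemma rQ: "r \<in> Q" using clo dQ eQ by simp
lemma pw1: "x \<in> Q \<Longrightarrow> pw x 1 = x" by (simp add: add_e_left)
lemma pw9: "x \<in> Q \<Longrightarrow> pw x 9 = e" using lagrange fin card9 by simp
lemma pw_mod: "x \<in> Q \<Longrightarrow> pw x n = pw x (n mod 9)"
proof -
  assume x: "x \<in> Q"
  have "pw x n = pw x (9 * (n div 9) + n mod 9)" by simp
  also have "\<dots> = add (pw (pw x 9) (n div 9)) (pw x (n mod 9))" by (simp only: pw_add pw_mult x)
  also have "\<dots> = pw x (n mod 9)" by (simp add: pw9 x pw_e add_e_left)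
  finally show ?thesis .
qed
lemma rr: "m r e = add r (pw d 4)"
proof -
  define u where "u = r" define w where "w = m u e" define l where "l = m e d"
  have Q: "u \<in> Q" "w \<in> Q" "l \<in> Q" using u_def w_def l_def clo dQ eQ by auto
  have A: "add u l = d" using prod[of d d] idem dQ u_def l_def by simp
  have "m u d = m l e" using q[of d e e] idem eQ dQ u_def l_def by simp
  hence B: "add w l = m l e" using prod[of u d] Q dQ u_def w_def l_def by simp
  have "m (add u l) e = u" using A u_def by simp
  hence C: "add w (m l e) = u" using R_hom Q w_def by simp
  have "add (add w (add w l)) u = add u u" using B C by simp
  moreover have "add (add w (add w l)) u = add (add l u) (add w w)" using Q by (simp add: add_ac add_closed)
  moreover have "pw w 2 = add w w" "pw u 2 = add u u" using Q by (simp_all add: numeral_2_eq_2 add_e_left)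
  ultimately have "add d (pw w 2) = pw u 2" using A add_comm[of l u] Q by simp
  hence "pw (add d (pw w 2)) 5 = pw (pw u 2) 5" by simp
  hence "add (pw d 5) (pw w 10) = pw u 10" using Q dQ by (simp add: pw_distrib pw_mult[symmetric])
  moreover have "pw w 10 = w" "pw u 10 = u" using pw_mod[of w 10] pw_mod[of u 10] pw1 Q by auto
  ultimately have "add (pw d 5) w = u" by simp
  hence "add (pw d 4) (add (pw d 5) w) = add (pw d 4) u" by simp
  hence "add (pw d 9) w = add (pw d 4) u" using Q dQ pw_add[of d 4 5] by (simp add: add_assoc)
  thus ?thesis using pw9 dQ Q add_e_left add_comm u_def w_def by simp
qed
definition lin where "lin a b = add (pw d a) (pw r b)"
lemma linQ[simp]: "lin a b \<in> Q" unfolding lin_def using dQ rQ add_closed by simp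
lemma lin_add: "add (lin a b) (lin c f) = lin (a+c) (b+f)"
  unfolding lin_def using dQ rQ by (simp add: pw_add add_ac add_closed)
lemma lin_mod: "lin a b = lin (a mod 9) (b mod 9)"
  unfolding lin_def using dQ rQ pw_mod by metis
lemma lin_pw: "pw (lin a b) k = lin (a*k) (b*k)"
  unfolding lin_def using dQ rQ by (simp add: pw_distrib pw_mult)
lemma lin00: "lin 0 0 = e" unfolding lin_def by (simp add: add_e_left eQ)
lemma lin10: "lin 1 0 = d" unfolding lin_def using dQ by (simp add: add_e_left add_e_right)
lemma R_lin: "m (lin a b) e = lin (4*b) (a+b)"
proof -
  have "m (lin a b) e = add (pw r a) (pw (add r (pw d 4)) b)"
    unfolding lin_def using dQ rQ by (simp add: R_hom R_pw rr)
  also have "\<dots> = lin (4*b) (a+b)" unfolding lin_def using dQ rQ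
    by (simp add: pw_distrib pw_add pw_mult[symmetric] add_ac add_closed mult.commute)
  finally show ?thesis .
qed
lemma add_lcancel: "c \<in> Q \<Longrightarrow> x \<in> Q \<Longrightarrow> y \<in> Q \<Longrightarrow> add c x = add c y \<Longrightarrow> x = y"
proof -
  assume h: "c \<in> Q" "x \<in> Q" "y \<in> Q" "add c x = add c y"
  obtain z where z: "z \<in> Q" "add z c = e" using add_inv h by blast
  have "add z (add c x) = add z (add c y)" using h by simp
  moreover have "add z (add c x) = x" using add_assoc[of z c x] z h add_e_left by simp
  moreover have "add z (add c y) = y" using add_assoc[of z c y] z h add_e_left by simp
  ultimately show ?thesis by simp
qed
lemma L_lin: "m e (lin a b) = lin (a+5*b) (8*a)"
proof -
  have 1: "add (m (lin a b) e) (m e (lin a b)) = lin a b"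
    using prod[of "lin a b" "lin a b"] idem by simp
  have "add (m (lin a b) e) (lin (a+5*b) (8*a)) = lin (a + 9*b) (9*a+b)"
    by (simp add: R_lin lin_add algebra_simps)
  also have "\<dots> = lin a b" using lin_mod[of "a+9*b" "9*a+b"] lin_mod[of a b] by simp
  finally show ?thesis using 1 add_lcancel[of "m (lin a b) e"] clo eQ by (metis linQ)
qed
lemma m_lin: "m (lin a b) (lin c f) = lin (4*b + (c+5*f)) (a+b+8*c)"
  using prod[of "lin a b" "lin c f"] by (simp add: R_lin L_lin lin_add)
lemma key: assumes "lin p q = e" and "\<not> (p mod 3 = 0 \<and> q mod 3 = 0)" shows "d = e"
proof -
  have 1: "lin (4*q) (p+q) = e" using R_lin[of p q] assms(1) idem eQ by simp
  have "add (pw (lin p q) (p+q)) (pw (lin (4*q) (p+q)) (8*q)) = e"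
    using assms(1) 1 by (simp add: pw_e add_e_left eQ)
  hence "lin (p*(p+q) + 4*q*(8*q)) (9*(q*(p+q))) = e" by (simp add: lin_pw lin_add algebra_simps)
  hence h9: "lin ((p+q)*p + 32*(q*q)) (9*(q*(p+q))) = e" by (simp add: algebra_simps)
  have "lin ((p+q)*p + 32*(q*q)) 0 = lin (((p+q)*p + 32*(q*q)) mod 9) 0"
    using lin_mod[of "(p+q)*p + 32*(q*q)" 0] by simp
  also have "\<dots> = lin ((p+q)*p + 32*(q*q)) (9*(q*(p+q)))"
    using lin_mod[of "(p+q)*p + 32*(q*q)" "9*(q*(p+q))"] by simp
  finally have "lin ((p+q)*p + 32*(q*q)) 0 = e" using h9 by simp
  hence 2: "pw d ((p+q)*p + 32*(q*q)) = e" unfolding lin_def using dQ by (simp add: add_e_right)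
  define D where "D = ((p+q)*p + 32*(q*q))"
  have "D mod 3 \<noteq> 0" using Dmod assms(2) D_def by simp
  hence t: "D mod 9 = 1 \<or> D mod 9 = 2 \<or> D mod 9 = 4 \<or> D mod 9 = 5 \<or> D mod 9 = 7 \<or> D mod 9 = 8" by presburger
  have 3: "pw d (D mod 9) = e" using 2 pw_mod[of d D] dQ D_def by simp
  have "\<exists>k. (D mod 9 * k) mod 9 = 1" using t by (auto intro: exI[of _ 1] exI[of _ 5] exI[of _ 7] exI[of _ 2] exI[of _ 4] exI[of _ 8])
  then obtain k where k: "(D mod 9 * k) mod 9 = 1" by blast
  have "pw d (D mod 9 * k) = e" using 3 pw_mult[of d "D mod 9" k] dQ pw_e by simp
  hence "pw d 1 = e" using pw_mod[of d "D mod 9 * k"] k dQ by simp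
  thus ?thesis using pw1 dQ by simp
qed
lemma lin_eq: assumes "lin a b = lin c f" and "d \<noteq> e" shows "a mod 3 = c mod 3 \<and> b mod 3 = f mod 3"
proof -
  have "add (lin a b) (lin (8*c) (8*f)) = add (lin c f) (lin (8*c) (8*f))" using assms by simp
  hence "lin (a+8*c) (b+8*f) = lin (9*c) (9*f)" by (simp add: lin_add)
  also have "\<dots> = e" using lin_mod[of "9*c" "9*f"] lin00 by simp
  finally have "(a+8*c) mod 3 = 0 \<and> (b+8*f) mod 3 = 0" using key[of "a+8*c" "b+8*f"] assms(2) by blast
  hence h1: "(a+8*c) mod 3 = 0" and h2: "(b+8*f) mod 3 = 0" by auto
  have "a mod 3 = c mod 3" using h1 by presburger
  moreover have "b mod 3 = f mod 3" using h2 by presburger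
  ultimately show ?thesis by simp
qed
lemma lin_neq: "d \<noteq> e \<Longrightarrow> \<not> (a mod 3 = c mod 3 \<and> b mod 3 = f mod 3) \<Longrightarrow> lin a b \<noteq> lin c f"
  using lin_eq by blast
end

theorem proposition4p2:
  fixes Q :: "'a set" and m :: "'a \<Rightarrow> 'a \<Rightarrow> 'a"
  assumes "quadratical_quasigroup Q m"
    and "finite Q" and "card Q = 9"
  shows "\<exists>a\<in>Q. \<exists>b\<in>Q. a \<noteq> b \<and>
    Q = {m (m a b) a} \<union> {a, m a b, m b a, b}
        \<union> {m a (m a b), m (m a b) b, m (m b a) a, m b (m b a)}"
proof -
  have qg: "quasigroup Q m" and qd: "\<And>x y z. x \<in> Q \<Longrightarrow> y \<in> Q \<Longrightarrow> z \<in> Q \<Longrightarrow> m (m x y) x = m (m z x) (m y z)"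
    using assms(1) unfolding quadratical_quasigroup_def by blast+
  have clo: "\<And>x y. x \<in> Q \<Longrightarrow> y \<in> Q \<Longrightarrow> m x y \<in> Q" using qg unfolding quasigroup_def by auto
  have ex1: "\<And>x y. x \<in> Q \<Longrightarrow> y \<in> Q \<Longrightarrow> \<exists>!z. z \<in> Q \<and> m x z = y"
    and ex2: "\<And>x y. x \<in> Q \<Longrightarrow> y \<in> Q \<Longrightarrow> \<exists>!z. z \<in> Q \<and> m z x = y"
    using qg unfolding quasigroup_def by auto
  define ld where "ld x y = (THE z. z \<in> Q \<and> m x z = y)" for x y
  define rd where "rd y x = (THE z. z \<in> Q \<and> m z x = y)" for x y
  have ld1: "\<And>x y. x \<in> Q \<Longrightarrow> y \<in> Q \<Longrightarrow> ld x y \<in> Q \<and> m x (ld x y) = y"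
    unfolding ld_def using ex1 by (rule theI')
  have rd1: "\<And>x y. x \<in> Q \<Longrightarrow> y \<in> Q \<Longrightarrow> rd y x \<in> Q \<and> m (rd y x) x = y"
    unfolding rd_def using ex2 by (rule theI')
  have ld2: "\<And>x y. x \<in> Q \<Longrightarrow> y \<in> Q \<Longrightarrow> ld x (m x y) = y"
  proof -
    fix x y assume h: "x \<in> Q" "y \<in> Q"
    show "ld x (m x y) = y" unfolding ld_def
      by (rule the1_equality) (auto simp: h ex1 clo)
  qed
  have rd2: "\<And>x y. x \<in> Q \<Longrightarrow> y \<in> Q \<Longrightarrow> rd (m x y) y = x"
  proof -
    fix x y assume h: "x \<in> Q" "y \<in> Q"
    show "rd (m x y) y = x" unfolding rd_def
      by (rule the1_equality) (auto simp: h ex2 clo)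
  qed
  have Qq: "qq Q m ld rd"
    apply unfold_locales
    apply (auto simp: clo ld1 rd1 ld2 rd2)[7]
    by (rule qd)
  have "Q \<noteq> {}" using assms(3) by auto
  then obtain a where aQ: "a \<in> Q" by blast
  have "card (Q - {a}) = 8" using assms(2,3) aQ by simp
  hence "Q - {a} \<noteq> {}" by (metis card.empty zero_neq_numeral)
  then obtain b where bQ: "b \<in> Q" and ab: "b \<noteq> a" by blast
  interpret qq9 Q m ld rd a b
    by (rule qq9.intro[OF qqe.intro[OF Qq]]) (unfold_locales, auto simp: aQ bQ assms)
  have x1: "m a b = lin 1 8" using m_lin[of 0 0 1 0] lin00 lin10 by simp
  have x2: "m b a = lin 0 1" using m_lin[of 1 0 0 0] lin00 lin10 by simp
  have x3: "m (lin 1 8) a = lin 32 9" using m_lin[of 1 8 0 0] lin00 by simp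
  have x4: "m a (lin 1 8) = lin 41 8" using m_lin[of 0 0 1 8] lin00 by simp
  have x5: "m (lin 1 8) b = lin 33 17" using m_lin[of 1 8 1 0] lin10 by simp
  have x6: "m (lin 0 1) a = lin 4 1" using m_lin[of 0 1 0 0] lin00 by simp
  have x7: "m b (lin 0 1) = lin 5 1" using m_lin[of 1 0 0 1] lin10 by simp
  define S where "S = {lin 32 9, lin 0 0, lin 1 8, lin 0 1, lin 1 0, lin 41 8, lin 33 17, lin 4 1, lin 5 1}"
  have "card S = 9" unfolding S_def using ab lin_neq by simp
  moreover have "S \<subseteq> Q" unfolding S_def by simp
  ultimately have SQ: "S = Q" using card_subset_eq[OF assms(2)] assms(3) by simp
  have eqS: "{m (m a b) a} \<union> {a, m a b, m b a, b}
        \<union> {m a (m a b), m (m a b) b, m (m b a) a, m b (m b a)} = S"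
    unfolding S_def lin00 lin10 by (simp only: x1 x2 x3 x4 x5 x6 x7 Un_insert_left Un_empty_left)
  have E: "Q = {m (m a b) a} \<union> {a, m a b, m b a, b}
        \<union> {m a (m a b), m (m a b) b, m (m b a) a, m b (m b a)}"
    by (simp only: SQ[symmetric] eqS[symmetric])
  have ab': "a \<noteq> b" using ab by (rule not_sym)
  show ?thesis
    apply (rule bexI[where x=a])
     apply (rule bexI[where x=b])
      apply (rule conjI[OF ab' E])
     apply (rule bQ)
    by (rule aQ)
qed
end
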